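(* Let $\mathbb{G}$ be a homogeneous group of homogeneous dimension $Q\geq3$, $|\cdot|$ a homogeneous quasi-norm, $2\leq p<Q$ and $-\infty<\alpha<\frac{Q-p}{p}$. Let $f\in C_0^\infty(\mathbb{G}\setminus\{0\})$ be radial, $f(x)=\tilde f(|x|)$, and define $g(x)=|x|^{\frac{Q-p-\alpha p}{p}}f(x)$. Then $$\int_{\mathbb{G}}\frac{|\mathcal{R}f(x)|^p}{|x|^{\alpha p}}dx-\left(\frac{Q-p-\alpha p}{p}\right)^p\int_{\mathbb{G}}\frac{|f(x)|^p}{|x|^{(\alpha+1)p}}dx\geq c_p\int_{\mathbb{G}}|\mathcal{R}g(x)|^p|x|^{p-Q}dx,$$ where $c_p=\min_{0<t\leq1/2}\left((1-t)^p-t^p+pt^{p-1}\right)$.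
   Context: A homogeneous group is a connected simply connected Lie group $\mathbb{G}$ with dilations $x\mapsto\lambda x$ induced by $D_\lambda=\mathrm{Exp}(A\ln\lambda)$ on its Lie algebra ($A$ diagonalisable with positive eigenvalues, $D_\lambda$ Lie algebra automorphisms), and homogeneous dimension $Q=\mathrm{Tr}\,A$. A homogeneous quasi-norm is a continuous nonnegative function $|\cdot|$, vanishing only at $0$, with $|x^{-1}|=|x|$, $|\lambda x|=\lambda|x|$. A function is radial if it depends only on $|x|$. Writing $x=ry$, $r=|x|$, $|y|=1$, the radial derivative is $\mathcal{R}f(x)=\frac{d}{dr}f(ry)$. Integrals are with respect to Haar measure. *)

theory Defs
  imports "HOL-Analysis.Analysis"
begin

text \<open>Homogeneous groups in exponential coordinates: the underlying set is R^N
  (here real^'n), the identity is 0, the inverse of x is -x, the dilations are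
  diagonal with positive weights nu i, and Haar measure is Lebesgue measure.\<close>

definition dil :: "('n::finite \<Rightarrow> real) \<Rightarrow> real \<Rightarrow> real^'n \<Rightarrow> real^'n" where
  "dil \<nu> r x = (\<chi> i. r powr (\<nu> i) * x $ i)"

definition hom_dim :: "('n::finite \<Rightarrow> real) \<Rightarrow> real" where
  "hom_dim \<nu> = (\<Sum>i\<in>UNIV. \<nu> i)"

definition homogeneous_group ::
  "(real^'n \<Rightarrow> real^'n \<Rightarrow> real^'n) \<Rightarrow> ('n::finite \<Rightarrow> real) \<Rightarrow> bool" where
  "homogeneous_group gmul \<nu> \<longleftrightarrow>
     (\<forall>i. \<nu> i > 0) \<and>
     (\<forall>x y z. gmul (gmul x y) z = gmul x (gmul y z)) \<and>
     (\<forall>x. gmul 0 x = x \<and> gmul x 0 = x) \<and>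
     (\<forall>x. gmul x (- x) = 0 \<and> gmul (- x) x = 0) \<and>
     continuous_on UNIV (\<lambda>(x, y). gmul x y) \<and>
     (\<forall>r>0. \<forall>x y. dil \<nu> r (gmul x y) = gmul (dil \<nu> r x) (dil \<nu> r y)) \<and>
     (\<forall>a. gmul a \<in> measurable lborel lborel \<and> distr lborel lborel (gmul a) = lborel)"

definition hom_quasi_norm :: "('n::finite \<Rightarrow> real) \<Rightarrow> (real^'n \<Rightarrow> real) \<Rightarrow> bool" where
  "hom_quasi_norm \<nu> N \<longleftrightarrow>
     continuous_on UNIV N \<and>
     (\<forall>x. N x \<ge> 0) \<and>
     (\<forall>x. N x = 0 \<longleftrightarrow> x = 0) \<and>
     (\<forall>x. N (- x) = N x) \<and>
     (\<forall>r>0. \<forall>x. N (dil \<nu> r x) = r * N x)"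

text \<open>Radial derivative: writing x = r y with r = |x|, |y| = 1,
  R f (x) = d/dr f(r y) evaluated at r = |x|.\<close>
definition rad_deriv ::
  "('n::finite \<Rightarrow> real) \<Rightarrow> (real^'n \<Rightarrow> real) \<Rightarrow> (real^'n \<Rightarrow> real) \<Rightarrow> real^'n \<Rightarrow> real" where
  "rad_deriv \<nu> N f x = deriv (\<lambda>r. f (dil \<nu> r (dil \<nu> (1 / N x) x))) (N x)"

coinductive smooth_fun :: "('a::real_normed_vector \<Rightarrow> real) \<Rightarrow> bool" where
  "(\<forall>x. f differentiable (at x)) \<Longrightarrow>
   (\<forall>v. smooth_fun (\<lambda>x. frechet_derivative f (at x) v)) \<Longrightarrow> smooth_fun f"

definition c_const :: "real \<Rightarrow> real" where
  "c_const p = (INF t\<in>{0<..1/2}. (1 - t) powr p - t powr p + p * t powr (p - 1))"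

end

theory Submission
  imports Defs
begin


lemma tangent_powr:
  fixes q x y :: real
  assumes q: "q \<ge> 1" and x: "x > 0" and y: "y \<ge> 0"
  shows "y powr q \<ge> x powr q + q * x powr (q - 1) * (y - x)"
proof (cases "y = 0")
  case True
  have "x powr q = x powr (q-1) * x" using x by (simp add: powr_diff)
  then show ?thesis using True q x by (simp add: algebra_simps)
next
  case False
  hence yp: "y > 0" using y by simp
  have D: "\<And>z. z > 0 \<Longrightarrow> ((\<lambda>z. z powr q) has_real_derivative q * z powr (q - 1)) (at z)"
    by (auto intro!: derivative_eq_intros)
  consider "x < y" | "x = y" | "y < x" by linarith
  then show ?thesis
  proof cases
    case 1
    then obtain z where z: "x < z" "z < y" "y powr q - x powr q = (y - x) * (q * z powr (q - 1))"
      using MVT2[of x y "\<lambda>z. z powr q" "\<lambda>z. q * z powr (q-1)"] D x by force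
    have "x powr (q-1) \<le> z powr (q-1)" using z x q by (intro powr_mono2) auto
    hence "q * x powr (q-1) * (y - x) \<le> (y - x) * (q * z powr (q - 1))" using 1 q
      by (simp add: mult_left_mono)
    then show ?thesis using z by linarith
  next
    case 2 then show ?thesis by simp
  next
    case 3
    then obtain z where z: "y < z" "z < x" "x powr q - y powr q = (x - y) * (q * z powr (q - 1))"
      using MVT2[of y x "\<lambda>z. z powr q" "\<lambda>z. q * z powr (q-1)"] D yp by force
    have "z powr (q-1) \<le> x powr (q-1)" using z yp q by (intro powr_mono2) auto
    hence "(x - y) * (q * z powr (q - 1)) \<le> (x - y) * (q * x powr (q-1))" using 3 q
      by (simp add: mult_left_mono)
    then show ?thesis using z by (simp add: algebra_simps)
  qed
qed

lemma cont_powr0: "q > 0 \<Longrightarrow> continuous_on S f \<Longrightarrow> (\<forall>x\<in>S. f x \<ge> 0) \<Longrightarrow> continuous_on S (\<lambda>x. f x powr (q::real))"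
  by (intro continuous_on_powr') auto

lemma A_ineq:
  fixes p s :: real assumes p: "p \<ge> 2" and s: "s \<ge> 0"
  shows "(s+1) powr p - s powr p - p * s powr (p-1) \<ge> 1"
proof -
  let ?f = "\<lambda>s. (s+1) powr p - s powr p - p * s powr (p-1)"
  have "?f 0 \<le> ?f s"
  proof (rule DERIV_nonneg_imp_increasing_open[OF s])
    fix x assume x: "0 < x" "x < s"
    have "((s+1) powr (p-1) \<ge> 0)" by simp
    have t: "(x+1) powr (p-1) \<ge> x powr (p-1) + (p-1) * x powr (p-1-1) * ((x+1) - x)"
      using x p by (intro tangent_powr) auto
    have "DERIV ?f x :> p * (x+1) powr (p-1) - p * x powr (p-1) - p * ((p-1) * x powr (p-1-1))"
      using x p by (auto intro!: derivative_eq_intros)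
    moreover have "p * (x+1) powr (p-1) - p * x powr (p-1) - p * ((p-1) * x powr (p-1-1)) \<ge> 0"
    proof -
      have "p * (x+1) powr (p-1) \<ge> p * (x powr (p-1) + (p-1) * x powr (p-1-1))"
        using t p by (intro mult_left_mono) auto
      thus ?thesis by (simp add: algebra_simps)
    qed
    ultimately show "\<exists>y. DERIV ?f x :> y \<and> y \<ge> 0" by blast
  next
    show "continuous_on {0..s} ?f" using p
      by (intro continuous_intros cont_powr0) auto
  qed
  thus ?thesis by simp
qed

lemma B_ineq:
  fixes p s :: real assumes p: "p \<ge> 2" and s: "s \<ge> 0"
  shows "s powr p - (s+1) powr p + p * (s+1) powr (p-1) \<ge> 1"
proof -
  let ?f = "\<lambda>s. s powr p - (s+1) powr p + p * (s+1) powr (p-1)"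
  have "?f 0 \<le> ?f s"
  proof (rule DERIV_nonneg_imp_increasing_open[OF s])
    fix x assume x: "0 < x" "x < s"
    have t: "x powr (p-1) \<ge> (x+1) powr (p-1) + (p-1) * (x+1) powr (p-1-1) * (x - (x+1))"
      using x p by (intro tangent_powr) auto
    have "DERIV ?f x :> p * x powr (p-1) - p * (x+1) powr (p-1) + p * ((p-1) * (x+1) powr (p-1-1))"
      using x p by (auto intro!: derivative_eq_intros)
    moreover have "p * x powr (p-1) - p * (x+1) powr (p-1) + p * ((p-1) * (x+1) powr (p-1-1)) \<ge> 0"
    proof -
      have "p * x powr (p-1) \<ge> p * ((x+1) powr (p-1) - (p-1) * (x+1) powr (p-1-1))"
        using t p by (intro mult_left_mono) auto
      thus ?thesis by (simp add: algebra_simps)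
    qed
    ultimately show "\<exists>y. DERIV ?f x :> y \<and> y \<ge> 0" by blast
  next
    show "continuous_on {0..s} ?f" using p
      by (intro continuous_intros cont_powr0) auto
  qed
  thus ?thesis using p by simp
qed

lemma cp_lower:
  fixes p t :: real assumes p: "p \<ge> 0" and t: "0 < t" "t \<le> 1/2"
  shows "c_const p \<le> (1 - t) powr p - t powr p + p * t powr (p - 1)"
  unfolding c_const_def
proof (rule cInf_lower)
  show "(1 - t) powr p - t powr p + p * t powr (p - 1)
    \<in> (\<lambda>t. (1 - t) powr p - t powr p + p * t powr (p - 1)) ` {0<..1/2}" using t by auto
  show "bdd_below ((\<lambda>t. (1 - t) powr p - t powr p + p * t powr (p - 1)) ` {0<..1/2})"
  proof (rule bdd_belowI2[where m=0])
    fix x :: real assume x: "x \<in> {0<..1/2}"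
    have "x powr p \<le> (1-x) powr p" using x p by (intro powr_mono2) auto
    moreover have "0 \<le> p * x powr (p-1)" using p by simp
    ultimately show "0 \<le> (1 - x) powr p - x powr p + p * x powr (p - 1)" by linarith
  qed
qed

lemma cp_le1:
  fixes p :: real assumes p: "p \<ge> 2"
  shows "c_const p \<le> 1"
proof -
  have "c_const p \<le> (1 - 1/2) powr p - (1/2) powr p + p * (1/2) powr (p - 1)"
    using p by (intro cp_lower) auto
  also have "\<dots> = p / 2 powr (p-1)" by (simp add: powr_divide)
  also have "\<dots> \<le> 1"
  proof -
    have "2 powr (p-1) \<ge> 1 powr (p-1) + (p-1) * 1 powr (p-1-1) * (2 - 1)"
      using p by (intro tangent_powr) auto
    hence "2 powr (p-1) \<ge> p" by simp
    thus ?thesis by simp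
  qed
  finally show ?thesis .
qed

definition psi :: "real \<Rightarrow> real \<Rightarrow> real" where
  "psi p y = sgn y * \<bar>y\<bar> powr (p - 1)"

lemma h_ineq:
  fixes p u :: real assumes p: "p \<ge> 2"
  shows "\<bar>u+1\<bar> powr p - \<bar>u\<bar> powr p - p * psi p u \<ge> c_const p"
proof -
  have c1: "c_const p \<le> 1" using cp_le1[OF p] .
  consider "u \<ge> 0" | "u \<le> -1" | "-1 < u" "u < 0" by linarith
  then show ?thesis
  proof cases
    case 1
    have "psi p u = u powr (p-1)" using 1 by (cases "u = 0") (auto simp: psi_def)
    then show ?thesis using A_ineq[OF p 1] 1 c1 by (simp add: add.commute)
  next
    case 2
    define s where "s = -u-1"
    have s: "s \<ge> 0" "\<bar>u+1\<bar> = s" "\<bar>u\<bar> = s+1" "psi p u = - ((s+1) powr (p-1))"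
      using 2 by (auto simp: s_def psi_def)
    show ?thesis using B_ineq[OF p s(1)] s c1 by simp
  next
    case 3
    define t where "t = -u"
    have t: "0 < t" "t < 1" "\<bar>u+1\<bar> = 1 - t" "\<bar>u\<bar> = t" "psi p u = - (t powr (p-1))"
      using 3 by (auto simp: t_def psi_def)
    have "c_const p \<le> (1 - t) powr p - t powr p + p * t powr (p - 1)"
    proof (cases "t \<le> 1/2")
      case True then show ?thesis using cp_lower[of p t] p t by simp
    next
      case False
      define s where "s = 1 - t"
      have s: "0 < s" "s < t" "s \<le> 1/2" "1 - s = t" using False t by (auto simp: s_def)
      have c: "c_const p \<le> (1 - s) powr p - s powr p + p * s powr (p - 1)"
        using cp_lower[of p s] p s by simp
      define X where "X = t powr (p-1)"
      define Y where "Y = s powr (p-1)"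
      have tp: "t powr p = t * X" using t by (simp add: X_def powr_diff)
      have sp: "s powr p = s * Y" using s by (simp add: Y_def powr_diff)
      have tX: "X = t * t powr (p-2)"
      proof -
        have "t * t powr (p-2) = t powr (1 + (p-2))" using t(1) by (intro powr_mult_base) simp
        thus ?thesis by (simp add: X_def)
      qed
      have sY: "Y = s * s powr (p-2)"
      proof -
        have "s * s powr (p-2) = s powr (1 + (p-2))" using s(1) by (intro powr_mult_base) simp
        thus ?thesis by (simp add: Y_def)
      qed
      have m2: "s powr (p-2) \<le> t powr (p-2)" using s p by (intro powr_mono2) auto
      have XY: "Y \<le> X" unfolding X_def Y_def using s p by (intro powr_mono2) auto
      have "s * X - t * Y = s * t * (t powr (p-2) - s powr (p-2))" by (simp add: tX sY algebra_simps)
      also have "\<dots> \<ge> 0" using m2 s by simp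
      finally have k0: "t * Y \<le> s * X" by simp
      have "X = X * s + X * t" "Y = Y * s + Y * t" using s(4) by (simp_all flip: distrib_left)
      hence key: "t * X - s * Y \<le> X - Y" using k0 by (simp add: algebra_simps)
      have "(1 - s) powr p - s powr p + p * s powr (p - 1) \<le> (1 - t) powr p - t powr p + p * t powr (p - 1)"
      proof -
        have "(1 - t) powr p - t powr p + p * t powr (p - 1) - ((1 - s) powr p - s powr p + p * s powr (p - 1))
          = p * (X - Y) - 2 * (t * X - s * Y)"
          by (simp add: s(4) s_def[symmetric] tp sp X_def[symmetric] Y_def[symmetric] algebra_simps)
        also have "\<dots> \<ge> (p - 2) * (X - Y)" using key by (simp add: algebra_simps)
        also have "(p - 2) * (X - Y) \<ge> 0" using XY p by simp
        finally show ?thesis by simp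
      qed
      then show ?thesis using c by linarith
    qed
    then show ?thesis using t by simp
  qed
qed

lemma elem_ineq:
  fixes p A B :: real assumes p: "p \<ge> 2"
  shows "\<bar>A+B\<bar> powr p \<ge> \<bar>A\<bar> powr p + c_const p * \<bar>B\<bar> powr p + p * psi p A * B"
proof (cases "B = 0")
  case True then show ?thesis using p by simp
next
  case False
  define u where "u = A / B"
  have A: "A = u * B" using False by (simp add: u_def)
  have e1: "\<bar>A+B\<bar> powr p = \<bar>u+1\<bar> powr p * \<bar>B\<bar> powr p"
  proof -
    have "A + B = (u+1) * B" by (simp add: A distrib_right)
    thus ?thesis by (simp add: abs_mult powr_mult)
  qed
  have e2: "\<bar>A\<bar> powr p = \<bar>u\<bar> powr p * \<bar>B\<bar> powr p"
    by (simp add: A abs_mult powr_mult)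
  have bb: "\<bar>B\<bar> powr (p-1) * \<bar>B\<bar> = \<bar>B\<bar> powr p" using False by (simp add: powr_diff)
  have e3: "psi p A * B = psi p u * \<bar>B\<bar> powr p"
  proof -
    have "psi p A * B = sgn u * \<bar>u\<bar> powr (p-1) * (\<bar>B\<bar> powr (p-1) * (sgn B * B))"
      by (simp add: psi_def A sgn_mult abs_mult powr_mult)
    also have "sgn B * B = \<bar>B\<bar>" by (simp add: sgn_mult_abs abs_sgn)
    finally show ?thesis using bb by (simp add: psi_def)
  qed
  have h: "\<bar>u+1\<bar> powr p - \<bar>u\<bar> powr p - p * psi p u \<ge> c_const p" by (rule h_ineq[OF p])
  have "\<bar>A\<bar> powr p + c_const p * \<bar>B\<bar> powr p + p * psi p A * B
     = \<bar>A\<bar> powr p + c_const p * \<bar>B\<bar> powr p + p * (psi p A * B)" by (simp only: mult.assoc)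
  also have "\<dots> = (\<bar>u\<bar> powr p + c_const p + p * psi p u) * \<bar>B\<bar> powr p"
    unfolding e3 e2 by (simp add: algebra_simps)
  also have "\<dots> \<le> \<bar>u+1\<bar> powr p * \<bar>B\<bar> powr p"
    using h by (intro mult_right_mono) auto
  finally show ?thesis using e1 by simp
qed


lemma dil_mult: "r \<ge> 0 \<Longrightarrow> s \<ge> 0 \<Longrightarrow> dil \<nu> r (dil \<nu> s x) = dil \<nu> (r * s) x"
  by (simp add: dil_def vec_eq_iff powr_mult)

lemma dil_1[simp]: "dil \<nu> 1 x = x"
  by (simp add: dil_def vec_eq_iff)

lemma dil_0[simp]: "dil \<nu> 0 x = 0"
  by (simp add: dil_def vec_eq_iff)

lemma linear_dil: "linear (dil \<nu> r)"
  by (rule linearI) (simp_all add: dil_def vec_eq_iff algebra_simps)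

lemma dil_inv: "r > 0 \<Longrightarrow> dil \<nu> (1/r) (dil \<nu> r x) = x"
  by (simp add: dil_mult)

lemma dil_inv2: "r > 0 \<Longrightarrow> dil \<nu> r (dil \<nu> (1/r) x) = x"
  by (simp add: dil_mult)

lemma
  assumes "hom_quasi_norm \<nu> N"
  shows N_dil: "r > 0 \<Longrightarrow> N (dil \<nu> r x) = r * N x"
    and N_0: "N 0 = 0"
    and N_pos: "x \<noteq> 0 \<Longrightarrow> N x > 0"
    and N_ge0: "N x \<ge> 0"
    and N_cont: "continuous_on UNIV N"
  using assms unfolding hom_quasi_norm_def by (auto simp: order_le_less)

lemma N_dil_norm:
  assumes hq: "hom_quasi_norm \<nu> N" and x: "x \<noteq> 0"
  shows "N (dil \<nu> (1 / N x) x) = 1"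
  using N_dil[OF hq, of "1 / N x" x] N_pos[OF hq x] by simp

lemma cont_dil_r:
  assumes "\<forall>i. \<nu> i > 0"
  shows "continuous_on {0..} (\<lambda>r. dil \<nu> r x)"
proof -
  have "continuous_on {0..} (\<lambda>r. r powr \<nu> i * x$i)" for i
  proof (rule continuous_on_mult_right, rule continuous_on_powr')
    show "\<forall>r\<in>{0..}. 0 \<le> r \<and> (r = 0 \<longrightarrow> 0 < \<nu> i)" using assms by auto
  qed (auto intro: continuous_on_id continuous_on_const)
  thus ?thesis unfolding dil_def by (intro continuous_on_vec_lambda)
qed

lemma N_lower:
  assumes hq: "hom_quasi_norm \<nu> N" and nu: "\<forall>i. \<nu> i > 0"
  obtains m where "m > 0" "\<And>x. norm x \<ge> 1 \<Longrightarrow> N x \<ge> m"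
proof -
  let ?S = "sphere (0::real^'a) 1"
  have ne: "?S \<noteq> {}" by simp
  have co: "compact ?S" by simp
  have cn: "continuous_on ?S N" using N_cont[OF hq] continuous_on_subset by blast
  obtain z where z: "z \<in> ?S" "\<And>y. y \<in> ?S \<Longrightarrow> N z \<le> N y"
    using continuous_attains_inf[OF co ne cn] by auto
  have "z \<noteq> 0" using z by auto
  hence m: "N z > 0" using N_pos[OF hq] by auto
  show ?thesis
  proof (rule that[OF m])
    fix x :: "real^'a" assume x: "norm x \<ge> 1"
    have "continuous_on {0..1} (\<lambda>r. dil \<nu> r x)"
      by (rule continuous_on_subset[OF cont_dil_r[OF nu]]) auto
    hence c: "continuous_on {0..1} (\<lambda>r. norm (dil \<nu> r x))"
      by (rule continuous_on_norm)
    have "\<exists>r. 0 \<le> r \<and> r \<le> 1 \<and> norm (dil \<nu> r x) = 1"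
      by (rule IVT'[OF _ _ _ c]) (use x in simp_all)
    then obtain r where r: "0 \<le> r" "r \<le> 1" "norm (dil \<nu> r x) = 1" by blast
    have r0: "r > 0"
    proof (rule ccontr)
      assume "\<not> r > 0" hence "r = 0" using r by simp
      thus False using r by simp
    qed
    have "N z \<le> N (dil \<nu> r x)" using z r by simp
    also have "\<dots> = r * N x" using N_dil[OF hq r0] .
    also have "\<dots> \<le> N x" using r N_ge0[OF hq, of x] by (simp add: mult_left_le_one_le)
    finally show "N z \<le> N x" .
  qed
qed

lemma bounded_N_less:
  assumes hq: "hom_quasi_norm \<nu> N" and nu: "\<forall>i. \<nu> i > 0"
  shows "bounded {x. N x < R}"
proof -
  obtain m where m: "m > 0" "\<And>x. norm x \<ge> 1 \<Longrightarrow> N x \<ge> m" using N_lower[OF hq nu] by blast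
  show ?thesis
  proof (cases "R > 0")
    case False
    hence "{x. N x < R} = {}" using N_ge0[OF hq] by (auto simp: not_less) (meson le_less_trans not_less)
    thus ?thesis by simp
  next
    case True
    have sub: "{x. N x < R} \<subseteq> dil \<nu> (R/m) ` ball 0 1"
    proof
      fix y assume y: "y \<in> {x. N x < R}"
      define z where "z = dil \<nu> (m/R) y"
      have "N z = (m/R) * N y" unfolding z_def using N_dil[OF hq, of "m/R" y] m True by simp
      also have "\<dots> < m" using y m True by (simp add: field_simps)
      finally have "norm z < 1" using m(2)[of z] by (meson not_less)
      moreover have "y = dil \<nu> (R/m) z" unfolding z_def using m True by (simp add: dil_mult)
      ultimately show "y \<in> dil \<nu> (R/m) ` ball 0 1" by auto
    qed
    have "bounded (dil \<nu> (R/m) ` ball 0 1)"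
      by (intro bounded_linear_image linear_dil[THEN linear_conv_bounded_linear[THEN iffD1]]) auto
    thus ?thesis using sub bounded_subset by blast
  qed
qed


lemma measure_eqI_lessThan':
  fixes M N :: "real measure"
  assumes sets: "sets M = sets borel" "sets N = sets borel"
  assumes fin: "\<And>x. emeasure M {..< x} < \<infinity>"
  assumes "\<And>x. emeasure M {..< x} = emeasure N {..< x}"
  shows "M = N"
proof (rule measure_eqI_generator_eq_countable)
  let ?LT = "\<lambda>a::real. {..< a}" let ?E = "range ?LT"
  show "Int_stable ?E"
  proof (rule Int_stableI)
    fix A B assume "A \<in> ?E" "B \<in> ?E"
    then obtain a b where "A = {..<a}" "B = {..<b}" by auto
    moreover have "{..<a} \<inter> {..<b} = {..<min a b}" by auto
    ultimately show "A \<inter> B \<in> ?E" by auto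
  qed
  show "?E \<subseteq> Pow UNIV" "sets M = sigma_sets UNIV ?E" "sets N = sigma_sets UNIV ?E"
    unfolding sets borel_Iio by auto
  show "?LT`Rats \<subseteq> ?E" "(\<Union>i\<in>Rats. ?LT i) = UNIV" "\<And>a. a \<in> ?LT`Rats \<Longrightarrow> emeasure M a \<noteq> \<infinity>"
  proof -
    have "\<exists>q\<in>\<rat>. x < q" for x :: real
      using Rats_no_top_le[of "x+1"] by (metis add.commute less_add_one order_less_le_trans)
    thus "?LT`Rats \<subseteq> ?E" "(\<Union>i\<in>Rats. ?LT i) = UNIV" "\<And>a. a \<in> ?LT`Rats \<Longrightarrow> emeasure M a \<noteq> \<infinity>"
      using fin by (auto simp: less_top)
  qed
qed (auto intro: assms countable_rat)

lemma N_less_sets: "hom_quasi_norm \<nu> N \<Longrightarrow> {x. N x < R} \<in> sets lborel"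
  using N_cont[of \<nu> N] by (auto intro!: borel_open open_Collect_less continuous_on_const)

lemma N_less_fmeas:
  assumes hq: "hom_quasi_norm \<nu> N" and nu: "\<forall>i. \<nu> i > 0"
  shows "{x. N x < R} \<in> fmeasurable lborel"
proof -
  have o: "open {x. N x < R}" using N_cont[OF hq] by (auto intro!: open_Collect_less continuous_on_const)
  have "{x. N x < R} \<in> lmeasurable" by (rule lmeasurable_open[OF bounded_N_less[OF hq nu] o])
  thus ?thesis using N_less_sets[OF hq] by (auto simp: fmeasurable_def)
qed

lemma N_less_scale:
  assumes hq: "hom_quasi_norm \<nu> N" and nu: "\<forall>i. \<nu> i > 0" and r: "r > 0"
  shows "measure lborel {x. N x < r} = r powr hom_dim \<nu> * measure lborel {x. N x < 1}"
proof -
  have eq: "{x. N x < r} = (\<lambda>x. \<chi> k. r powr \<nu> k * x$k) ` {x. N x < 1}"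
  proof (intro set_eqI iffI)
    fix y assume y: "y \<in> {x. N x < r}"
    have "r * N (dil \<nu> (1/r) y) < r * 1" using y r N_dil[OF hq, of "1/r" y] by (simp add: field_simps)
    hence "N (dil \<nu> (1/r) y) < 1" using r by (simp only: mult_less_cancel_left_pos)
    moreover have "y = dil \<nu> r (dil \<nu> (1/r) y)" using r by (simp add: dil_inv2)
    ultimately show "y \<in> (\<lambda>x. \<chi> k. r powr \<nu> k * x$k) ` {x. N x < 1}"
      unfolding dil_def[of _ r] by blast
  next
    fix y assume "y \<in> (\<lambda>x. \<chi> k. r powr \<nu> k * x$k) ` {x. N x < 1}"
    then obtain z where "N z < 1" "y = dil \<nu> r z" unfolding dil_def by auto
    thus "y \<in> {x. N x < r}" using N_dil[OF hq r] r by simp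
  qed
  have lm: "{x. N x < 1} \<in> lmeasurable"
    using N_less_fmeas[OF hq nu] N_less_sets[OF hq] by (simp add: fmeasurable_def)
  have "measure lebesgue {x. N x < r} = \<bar>prod (\<lambda>k. r powr \<nu> k) UNIV\<bar> * measure lebesgue {x. N x < 1}"
    unfolding eq by (rule measure_stretch[OF lm])
  also have "prod (\<lambda>k. r powr \<nu> k) UNIV = r powr hom_dim \<nu>"
    using r by (simp add: hom_dim_def powr_sum)
  finally show ?thesis using N_less_sets[OF hq] by simp
qed

lemma hom_dim_pos: "\<forall>i. \<nu> i > 0 \<Longrightarrow> hom_dim (\<nu>::'n::finite \<Rightarrow> real) > 0"
  unfolding hom_dim_def by (intro sum_pos) auto

lemma N_meas: "hom_quasi_norm \<nu> N \<Longrightarrow> N \<in> borel_measurable lborel"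
  using N_cont[of \<nu> N] by (auto intro: borel_measurable_continuous_onI)

lemma N_band_emeasure:
  assumes hq: "hom_quasi_norm \<nu> N" and nu: "\<forall>i. \<nu> i > 0" and a: "0 < a" "a < x"
  shows "emeasure lborel {y. a \<le> N y \<and> N y < x}
     = ennreal (measure lborel {y. N y < 1} * x powr hom_dim \<nu> - measure lborel {y. N y < 1} * a powr hom_dim \<nu>)"
proof -
  have eq: "{y. a \<le> N y \<and> N y < x} = {y. N y < x} - {y. N y < a}" by auto
  have f1: "{y. N y < x} \<in> fmeasurable lborel" "{y. N y < a} \<in> fmeasurable lborel"
    using N_less_fmeas[OF hq nu] by auto
  have "{y. N y < x} - {y. N y < a} \<in> fmeasurable lborel" using f1 by (intro fmeasurable_Diff) (auto simp: fmeasurable_def)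
  hence "emeasure lborel ({y. N y < x} - {y. N y < a}) = measure lborel ({y. N y < x} - {y. N y < a})"
    by (rule emeasure_eq_measure2)
  also have "measure lborel ({y. N y < x} - {y. N y < a}) = measure lborel {y. N y < x} - measure lborel {y. N y < a}"
    using f1 a by (intro measure_Diff) (auto simp: fmeasurable_def)
  also have "\<dots> = measure lborel {y. N y < 1} * x powr hom_dim \<nu> - measure lborel {y. N y < 1} * a powr hom_dim \<nu>"
    using N_less_scale[OF hq nu, of x] N_less_scale[OF hq nu, of a] a by simp
  finally show ?thesis unfolding eq .
qed

lemma polar:
  fixes N :: "real^'n::finite \<Rightarrow> real"
  assumes hq: "hom_quasi_norm \<nu> N" and nu: "\<forall>i. \<nu> i > 0"
    and a: "0 < a" "a \<le> b" and h: "continuous_on {a..b} h"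
  shows "integrable lborel (\<lambda>x. indicator {a..b} (N x) * h (N x))"
    and "(\<integral>x. indicator {a..b} (N x) * h (N x) \<partial>lborel)
       = (hom_dim \<nu> * measure lborel {x. N x < 1}) * (\<integral>r. indicator {a..b} r * (h r * r powr (hom_dim \<nu> - 1)) \<partial>lborel)"
proof -
  define Q where "Q = hom_dim \<nu>"
  define m1 where "m1 = measure lborel {x. N x < 1}"
  define \<sigma> where "\<sigma> = Q * m1"
  have Q: "Q > 0" unfolding Q_def by (rule hom_dim_pos[OF nu])
  have \<sigma>: "\<sigma> \<ge> 0" unfolding \<sigma>_def m1_def using Q by simp
  define M where "M = distr lborel borel N"
  define w where "w r = indicator {a..} r * (\<sigma> * r powr (Q - 1))" for r :: real
  define H where "H r = indicator {a..b} r * h r" for r :: real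
  have Nm[measurable]: "N \<in> borel_measurable lborel" by (rule N_meas[OF hq])
  have Hm[measurable]: "H \<in> borel_measurable borel"
    unfolding H_def using borel_measurable_continuous_on_indicator[OF _ h] by simp
  have wm[measurable]: "w \<in> borel_measurable borel" unfolding w_def by measurable
  have w0: "w r \<ge> 0" for r unfolding w_def using \<sigma> by simp
  have dens: "density M (\<lambda>r. ennreal (indicator {a..} r)) = density lborel (\<lambda>r. ennreal (w r))"
  proof (rule measure_eqI_lessThan')
    show "sets (density M (\<lambda>r. ennreal (indicator {a..} r))) = sets borel" by (simp add: M_def)
    show "sets (density lborel (\<lambda>r. ennreal (w r))) = sets borel" by simp
    have L: "emeasure (density M (\<lambda>r. ennreal (indicator {a..} r))) {..<x} = emeasure lborel {y. a \<le> N y \<and> N y < x}" for x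
    proof -
      have "emeasure (density M (\<lambda>r. ennreal (indicator {a..} r))) {..<x}
          = (\<integral>\<^sup>+ r. ennreal (indicator {a..} r) * indicator {..<x} r \<partial>M)"
        by (subst emeasure_density) (auto simp: M_def)
      also have "\<dots> = (\<integral>\<^sup>+ r. indicator {a..<x} r \<partial>M)"
        by (intro nn_integral_cong) (auto split: split_indicator)
      also have "\<dots> = emeasure M {a..<x}" by (simp add: M_def)
      also have "\<dots> = emeasure lborel {y. a \<le> N y \<and> N y < x}"
        unfolding M_def by (subst emeasure_distr) (auto intro!: arg_cong[where f="emeasure lborel"])
      finally show ?thesis .
    qed
    have R: "emeasure (density lborel (\<lambda>r. ennreal (w r))) {..<x}
       = (if a < x then ennreal (m1 * x powr Q - m1 * a powr Q) else 0)" for x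
    proof -
      have "emeasure (density lborel (\<lambda>r. ennreal (w r))) {..<x} = (\<integral>\<^sup>+ r. ennreal (w r) * indicator {..<x} r \<partial>lborel)"
        by (subst emeasure_density) auto
      also have "\<dots> = (if a < x then ennreal (m1 * x powr Q - m1 * a powr Q) else 0)"
      proof (cases "a < x")
        case False
        have "(\<lambda>r. ennreal (w r) * indicator {..<x} r) = (\<lambda>r. 0)"
          using False unfolding w_def by (auto simp: fun_eq_iff split: split_indicator)
        thus ?thesis using False by simp
      next
        case True
        have "(\<integral>\<^sup>+ r. ennreal (w r) * indicator {..<x} r \<partial>lborel)
            = (\<integral>\<^sup>+ r. ennreal (\<sigma> * r powr (Q - 1)) * indicator {a..x} r \<partial>lborel)"
          using AE_lborel_singleton[of x]
          by (intro nn_integral_cong_AE) (auto simp: w_def elim!: eventually_mono split: split_indicator)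
        also have "\<dots> = ennreal (m1 * x powr Q - m1 * a powr Q)"
        proof (rule nn_integral_FTC_Icc)
          show "(\<lambda>r. \<sigma> * r powr (Q - 1)) \<in> borel_measurable borel" by measurable
          fix r assume r: "r \<in> {a..x}"
          hence r0: "r > 0" using a by auto
          show "((\<lambda>r. m1 * r powr Q) has_real_derivative \<sigma> * r powr (Q - 1)) (at r)"
            using r0 by (auto intro!: derivative_eq_intros simp: \<sigma>_def)
          show "0 \<le> \<sigma> * r powr (Q - 1)" using \<sigma> by simp
        qed (use True in simp)
        finally show ?thesis using True by simp
      qed
      finally show ?thesis .
    qed
    fix x :: real
    show "emeasure (density M (\<lambda>r. ennreal (indicator {a..} r))) {..<x} = emeasure (density lborel (\<lambda>r. ennreal (w r))) {..<x}"
    proof (cases "a < x")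
      case True
      then show ?thesis unfolding L R using N_band_emeasure[OF hq nu a(1) True] by (simp add: Q_def m1_def)
    next
      case False
      hence e: "{y. a \<le> N y \<and> N y < x} = {}" by auto
      show ?thesis unfolding L R e using False by simp
    qed
    show "emeasure (density M (\<lambda>r. ennreal (indicator {a..} r))) {..<x} < \<infinity>"
    proof (cases "a < x")
      case True thus ?thesis unfolding L using N_band_emeasure[OF hq nu a(1) True] by simp
    next
      case False
      hence e: "{y. a \<le> N y \<and> N y < x} = {}" by auto
      show ?thesis unfolding L e by simp
    qed
  qed
  have HH: "indicator {a..} r * H r = H r" for r unfolding H_def using a by (auto split: split_indicator)
  have WH: "w r * H r = indicator {a..b} r * (\<sigma> * (h r * r powr (Q - 1)))" for r
    unfolding H_def w_def using a by (auto split: split_indicator)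
  have i1: "integrable lborel (\<lambda>r. indicator {a..b} r * (\<sigma> * (h r * r powr (Q - 1))))"
  proof -
    have "continuous_on {a..b} (\<lambda>r. \<sigma> * (h r * r powr (Q - 1)))"
      using a by (intro continuous_intros h) auto
    from borel_integrable_atLeastAtMost'[OF this] show ?thesis
      by (simp add: set_integrable_def mult.commute)
  qed
  have "integrable (density lborel (\<lambda>r. ennreal (w r))) H"
    by (subst integrable_density) (use w0 i1 in \<open>auto simp: WH\<close>)
  hence "integrable M H"
    unfolding dens[symmetric] by (subst (asm) integrable_density) (auto simp: HH M_def)
  thus int: "integrable lborel (\<lambda>x. indicator {a..b} (N x) * h (N x))"
    unfolding M_def by (subst (asm) integrable_distr_eq) (auto simp: H_def)
  have "(\<integral>x. indicator {a..b} (N x) * h (N x) \<partial>lborel) = integral\<^sup>L M H"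
    unfolding M_def by (subst integral_distr) (auto simp: H_def)
  also have "\<dots> = integral\<^sup>L (density M (\<lambda>r. ennreal (indicator {a..} r))) H"
    by (subst integral_density) (auto simp: HH M_def)
  also have "\<dots> = integral\<^sup>L (density lborel (\<lambda>r. ennreal (w r))) H" unfolding dens ..
  also have "\<dots> = (\<integral>r. indicator {a..b} r * (\<sigma> * (h r * r powr (Q - 1))) \<partial>lborel)"
    by (subst integral_density) (use w0 in \<open>auto simp: WH\<close>)
  also have "\<dots> = \<sigma> * (\<integral>r. indicator {a..b} r * (h r * r powr (Q - 1)) \<partial>lborel)"
    by (simp add: mult.left_commute)
  finally show "(\<integral>x. indicator {a..b} (N x) * h (N x) \<partial>lborel)
       = (hom_dim \<nu> * measure lborel {x. N x < 1}) * (\<integral>r. indicator {a..b} r * (h r * r powr (hom_dim \<nu> - 1)) \<partial>lborel)"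
    by (simp add: \<sigma>_def Q_def m1_def)
qed


lemma psi_cont:
  fixes p :: real assumes p: "p \<ge> 2"
  shows "continuous_on UNIV (psi p)"
proof (cases "p = 2")
  case True
  have "psi p = (\<lambda>y. y)" using True by (auto simp: psi_def fun_eq_iff sgn_mult_abs)
  thus ?thesis by (simp add: continuous_on_id)
next
  case False
  have "psi p = (\<lambda>y. y * \<bar>y\<bar> powr (p - 2))"
  proof
    fix y :: real
    show "psi p y = y * \<bar>y\<bar> powr (p - 2)"
    proof (cases "y = 0")
      case False
      have "\<bar>y\<bar> * \<bar>y\<bar> powr (p-2) = \<bar>y\<bar> powr (1 + (p-2))" by (intro powr_mult_base) simp
      hence "\<bar>y\<bar> powr (p-1) = \<bar>y\<bar> * \<bar>y\<bar> powr (p-2)" by simp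
      thus ?thesis unfolding psi_def by (simp add: mult.assoc[symmetric] sgn_mult_abs)
    qed (simp add: psi_def)
  qed
  moreover have "continuous_on UNIV (\<lambda>y::real. y * \<bar>y\<bar> powr (p - 2))"
    using p False by (intro continuous_intros continuous_on_powr') auto
  ultimately show ?thesis by simp
qed

lemma psi_0[simp]: "psi p 0 = 0" by (simp add: psi_def)

lemma absp_deriv:
  fixes p y :: real assumes p: "p \<ge> 2"
  shows "((\<lambda>y. \<bar>y\<bar> powr p) has_real_derivative p * psi p y) (at y)"
proof -
  consider "y > 0" | "y < 0" | "y = 0" by linarith
  then show ?thesis
  proof cases
    case 1
    have "((\<lambda>y. y powr p) has_real_derivative p * y powr (p - 1)) (at y)"
      using 1 by (auto intro!: derivative_eq_intros)
    moreover have "p * y powr (p - 1) = p * psi p y" using 1 by (simp add: psi_def)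
    ultimately have "((\<lambda>y. y powr p) has_real_derivative p * psi p y) (at y)" by simp
    thus ?thesis by (rule has_field_derivative_transform_within_open[where S="{0<..}"]) (use 1 in auto)
  next
    case 2
    have "((\<lambda>y. (-y) powr p) has_real_derivative p * (-y) powr (p - 1) * (-1)) (at y)"
      using 2 by (auto intro!: derivative_eq_intros)
    moreover have "p * (-y) powr (p - 1) * (-1) = p * psi p y" using 2 by (simp add: psi_def)
    ultimately have "((\<lambda>y. (-y) powr p) has_real_derivative p * psi p y) (at y)" by simp
    thus ?thesis by (rule has_field_derivative_transform_within_open[where S="{..<0}"]) (use 2 in auto)
  next
    case 3
    have c: "((psi p) \<longlongrightarrow> psi p 0) (at 0)"
    proof -
      have "isCont (psi p) 0" using psi_cont[OF p] by (simp add: continuous_on_eq_continuous_at)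
      thus ?thesis by (simp add: isCont_def)
    qed
    have "((\<lambda>h. (\<bar>h\<bar> powr p - \<bar>0\<bar> powr p) / (h - 0)) \<longlongrightarrow> p * psi p 0) (at 0)"
    proof -
      have ne: "\<forall>\<^sub>F h in at (0::real). h \<noteq> 0" by (simp add: eventually_at_filter)
      have e: "\<forall>\<^sub>F h in at (0::real). psi p h = (\<bar>h\<bar> powr p - \<bar>0\<bar> powr p) / (h - 0)"
        using ne
      proof (rule eventually_mono)
        fix h :: real assume h: "h \<noteq> 0"
        have "\<bar>h\<bar> powr (p-1) * \<bar>h\<bar> = \<bar>h\<bar> powr p" using h by (simp add: powr_diff)
        hence "\<bar>h\<bar> powr p / h = sgn h * \<bar>h\<bar> powr (p-1)" using h
          by (auto simp: field_simps sgn_if)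
        thus "psi p h = (\<bar>h\<bar> powr p - \<bar>0\<bar> powr p) / (h - 0)" using p by (simp add: psi_def)
      qed
      have "psi p 0 = p * psi p 0" by simp
      thus ?thesis using tendsto_cong[OF e] c by metis
    qed
    thus ?thesis using 3 by (simp add: has_field_derivative_iff)
  qed
qed

lemma psi_scale: "c > 0 \<Longrightarrow> psi p (c * y) = c powr (p - 1) * psi p y"
  by (simp add: psi_def sgn_mult abs_mult powr_mult)


lemma pointwise:
  fixes p r C Q \<alpha> F D :: real
  assumes p: "p \<ge> 2" and r: "r > 0" and C: "C > 0" and Cp: "C * p = Q - p - \<alpha> * p"
  shows "\<bar>D\<bar> powr p / r powr (\<alpha>*p) * r powr (Q-1)
     - C powr p * (\<bar>F\<bar> powr p / r powr ((\<alpha>+1)*p) * r powr (Q-1))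
     - c_const p * (\<bar>C * r powr (C-1) * F + r powr C * D\<bar> powr p * r powr (p - Q) * r powr (Q-1))
     \<ge> - (p * psi p (r powr C * F) * (C * r powr (C-1) * F + r powr C * D)) * C powr (p-1)"
proof -
  define dG where "dG = C * r powr (C-1) * F + r powr C * D"
  define A where "A = C * r powr (C-1) * F"
  define B where "B = - dG"
  have AB: "A + B = - (r powr C * D)" by (simp add: A_def B_def dG_def)
  have E: "\<bar>A+B\<bar> powr p \<ge> \<bar>A\<bar> powr p + c_const p * \<bar>B\<bar> powr p + p * psi p A * B"
    by (rule elem_ineq[OF p])
  define w where "w = r powr (p - 1)"
  have w: "w > 0" using r by (simp add: w_def)
  have E2: "w * \<bar>A+B\<bar> powr p \<ge> w * \<bar>A\<bar> powr p + c_const p * (w * \<bar>B\<bar> powr p) + p * (w * psi p A) * B"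
    using mult_left_mono[OF E, of w] w by (simp add: algebra_simps)
  have i1: "w * \<bar>A+B\<bar> powr p = \<bar>D\<bar> powr p / r powr (\<alpha>*p) * r powr (Q-1)"
  proof -
    have "w * \<bar>A+B\<bar> powr p = r powr (p-1) * (r powr (C*p) * \<bar>D\<bar> powr p)"
      unfolding AB w_def using r by (simp add: abs_mult powr_mult powr_powr)
    also have "r powr (p-1) * r powr (C*p) = r powr (Q-1) / r powr (\<alpha>*p)"
    proof -
      have e: "p - 1 + C * p = Q - 1 - \<alpha>*p" using Cp by (simp add: algebra_simps)
      show ?thesis by (simp only: powr_add[symmetric] powr_diff[symmetric] e)
    qed
    ultimately show ?thesis by (simp add: algebra_simps)
  qed
  have i2: "w * \<bar>A\<bar> powr p = C powr p * (\<bar>F\<bar> powr p / r powr ((\<alpha>+1)*p) * r powr (Q-1))"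
  proof -
    have "w * \<bar>A\<bar> powr p = C powr p * \<bar>F\<bar> powr p * (r powr (p-1) * r powr ((C-1)*p))"
      unfolding A_def w_def using r C by (simp add: abs_mult powr_mult powr_powr)
    also have "r powr (p-1) * r powr ((C-1)*p) = r powr (Q-1) / r powr ((\<alpha>+1)*p)"
    proof -
      have e: "p - 1 + (C - 1) * p = Q - 1 - (\<alpha>+1)*p" using Cp by (simp add: algebra_simps)
      show ?thesis by (simp only: powr_add[symmetric] powr_diff[symmetric] e)
    qed
    finally show ?thesis by (simp add: algebra_simps)
  qed
  have i3: "w * \<bar>B\<bar> powr p = \<bar>dG\<bar> powr p * r powr (p - Q) * r powr (Q-1)"
  proof -
    have "r powr (p - Q) * r powr (Q-1) = r powr (p-1)" using r by (simp add: powr_add[symmetric])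
    thus ?thesis by (simp add: B_def w_def)
  qed
  have i4: "w * psi p A = psi p (r powr C * F) * C powr (p-1)"
  proof -
    have "psi p A = (C * r powr (C-1)) powr (p-1) * psi p F"
      unfolding A_def using C r by (intro psi_scale) simp
    moreover have "psi p (r powr C * F) = (r powr C) powr (p-1) * psi p F"
      using r by (intro psi_scale) simp
    moreover have "r powr (p-1) * (C * r powr (C-1)) powr (p-1) = C powr (p-1) * (r powr C) powr (p-1)"
    proof -
      have "r powr (p-1) * (C * r powr (C-1)) powr (p-1) = C powr (p-1) * (r powr (p-1) * r powr ((C-1)*(p-1)))"
        using C r by (simp add: powr_mult powr_powr)
      also have "r powr (p-1) * r powr ((C-1)*(p-1)) = r powr (C*(p-1))"
      proof -
        have e: "p - 1 + (C-1)*(p-1) = C*(p-1)" by (simp add: algebra_simps)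
        show ?thesis by (simp only: powr_add[symmetric] e)
      qed
      finally show ?thesis using r by (simp add: powr_powr)
    qed
    ultimately show ?thesis unfolding w_def by (simp add: algebra_simps)
  qed
  have i5: "p * (w * psi p A) * B = - (p * psi p (r powr C * F) * dG) * C powr (p-1)"
    unfolding i4 B_def by (simp add: algebra_simps)
  have "- (p * psi p (r powr C * F) * dG) * C powr (p-1) \<le> \<bar>D\<bar> powr p / r powr (\<alpha>*p) * r powr (Q-1)
     - C powr p * (\<bar>F\<bar> powr p / r powr ((\<alpha>+1)*p) * r powr (Q-1))
     - c_const p * (\<bar>dG\<bar> powr p * r powr (p - Q) * r powr (Q-1))"
    using E2[unfolded i1 i2 i3 i5] by linarith
  thus ?thesis by (simp add: dG_def)
qed


lemma ftc_zero:
  fixes G dG :: "real \<Rightarrow> real"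
  assumes p: "p \<ge> 2" and ab: "a \<le> b"
    and G: "\<And>r. r \<in> {a..b} \<Longrightarrow> (G has_real_derivative dG r) (at r)"
    and dGc: "continuous_on {a..b} dG" and Ga: "G a = 0" and Gb: "G b = 0"
  shows "integrable lborel (\<lambda>r. indicator {a..b} r * (p * psi p (G r) * dG r))"
    and "(\<integral>r. indicator {a..b} r * (p * psi p (G r) * dG r) \<partial>lborel) = 0"
proof -
  have Gc: "continuous_on {a..b} G"
    using G by (intro continuous_at_imp_continuous_on ballI DERIV_isCont) auto
  have fc: "continuous_on {a..b} (\<lambda>r. p * psi p (G r) * dG r)"
    using psi_cont[OF p] Gc dGc
    by (intro continuous_intros continuous_on_compose2[of UNIV "psi p" "{a..b}" G]) auto
  show "integrable lborel (\<lambda>r. indicator {a..b} r * (p * psi p (G r) * dG r))"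
    using borel_integrable_atLeastAtMost'[OF fc] by (simp add: set_integrable_def)
  have "(\<integral>r. indicator {a..b} r *\<^sub>R (p * psi p (G r) * dG r) \<partial>lborel) = \<bar>G b\<bar> powr p - \<bar>G a\<bar> powr p"
  proof (rule integral_FTC_atLeastAtMost[OF ab _ fc])
    fix x assume x: "a \<le> x" "x \<le> b"
    have "((\<lambda>r. \<bar>G r\<bar> powr p) has_real_derivative p * psi p (G x) * dG x) (at x)"
      using DERIV_chain2[OF absp_deriv[OF p] G[of x]] x by (simp add: mult.assoc)
    thus "((\<lambda>r. \<bar>G r\<bar> powr p) has_vector_derivative p * psi p (G x) * dG x) (at x within {a..b})"
      by (simp add: has_real_derivative_iff_has_vector_derivative[symmetric] has_field_derivative_at_within)
  qed
  thus "(\<integral>r. indicator {a..b} r * (p * psi p (G r) * dG r) \<partial>lborel) = 0" using Ga Gb p by simp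
qed


lemma rad_deriv_eq:
  assumes hq: "hom_quasi_norm \<nu> N" and x: "x \<noteq> 0"
    and D: "(\<phi> has_real_derivative D) (at (N x))" and psi: "\<And>z. \<psi> z = \<phi> (N z)"
  shows "rad_deriv \<nu> N \<psi> x = D"
proof -
  define y where "y = dil \<nu> (1 / N x) x"
  have y: "N y = 1" unfolding y_def by (rule N_dil_norm[OF hq x])
  have Nx: "N x > 0" by (rule N_pos[OF hq x])
  have "((\<lambda>r. \<psi> (dil \<nu> r y)) has_real_derivative D) (at (N x))"
  proof (rule has_field_derivative_transform_within_open[OF D, where S="{0<..}"])
    fix r :: real assume r: "r \<in> {0<..}"
    show "\<phi> r = \<psi> (dil \<nu> r y)" using N_dil[OF hq, of r y] r y by (simp add: psi)
  qed (use Nx in auto)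
  hence "deriv (\<lambda>r. \<psi> (dil \<nu> r y)) (N x) = D" by (rule DERIV_imp_deriv)
  thus ?thesis unfolding rad_deriv_def y_def .
qed

lemma dil_expand: "dil \<nu> r y = (\<Sum>i\<in>UNIV. (r powr \<nu> i * y$i) *\<^sub>R axis i 1)"
  by (simp add: vec_eq_iff dil_def axis_def if_distrib cong: if_cong)

lemma smooth_diff:
  assumes "smooth_fun f"
  shows "\<forall>x. f differentiable (at x)" and "\<And>v. continuous_on UNIV (\<lambda>x. frechet_derivative f (at x) v)"
proof -
  from assms have a: "\<forall>x. f differentiable (at x)" and b: "\<forall>v. smooth_fun (\<lambda>x. frechet_derivative f (at x) v)"
    by (auto elim: smooth_fun.cases)
  show "\<forall>x. f differentiable (at x)" by (rule a)
  fix v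
  from b have "smooth_fun (\<lambda>x. frechet_derivative f (at x) v)" by blast
  hence "\<forall>x. (\<lambda>x. frechet_derivative f (at x) v) differentiable (at x)" by (auto elim: smooth_fun.cases)
  thus "continuous_on UNIV (\<lambda>x. frechet_derivative f (at x) v)"
    by (intro differentiable_imp_continuous_on) (auto simp: differentiable_on_def)
qed

lemma ft_deriv:
  fixes f :: "real^'n::finite \<Rightarrow> real"
  assumes hq: "hom_quasi_norm \<nu> N" and nu: "\<forall>i. \<nu> i > 0"
    and sm: "smooth_fun f" and ff: "\<forall>x. f x = ft (N x)"
  obtains d where "\<And>r. r > 0 \<Longrightarrow> (ft has_real_derivative d r) (at r)" "continuous_on {0<..} d"
proof -
  define e :: "real^'n" where "e = 1"
  have e: "e \<noteq> 0" by (simp add: e_def vec_eq_iff)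
  define y0 where "y0 = dil \<nu> (1 / N e) e"
  have y0: "N y0 = 1" unfolding y0_def by (rule N_dil_norm[OF hq e])
  define \<gamma> where "\<gamma> r = dil \<nu> r y0" for r
  define Df where "Df z = frechet_derivative f (at z)" for z
  define g' where "g' i r = \<nu> i * (y0$i * r powr \<nu> i) / r" for i r
  define d where "d r = (\<Sum>i\<in>UNIV. g' i r * Df (\<gamma> r) (axis i 1))" for r
  have ftg: "ft r = f (\<gamma> r)" if "r > 0" for r using N_dil[OF hq that, of y0] y0 ff by (simp add: \<gamma>_def)
  have fd: "(f has_derivative Df z) (at z)" for z
    using smooth_diff(1)[OF sm] by (simp add: Df_def frechet_derivative_works)
  have bl: "linear (Df z)" for z using fd[of z] has_derivative_linear by blast
  show ?thesis
  proof
    fix r :: real assume r: "r > 0"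
    have pw: "r powr (\<nu> i - 1) = r powr \<nu> i / r" for i using r by (simp add: powr_diff)
    have gd: "(\<gamma> has_derivative (\<lambda>h. \<Sum>i\<in>UNIV. (h * g' i r) *\<^sub>R axis i 1)) (at r)"
      unfolding \<gamma>_def dil_expand g'_def using r
      by (auto intro!: derivative_eq_intros simp: algebra_simps)
    have "((\<lambda>r. f (\<gamma> r)) has_derivative (\<lambda>h. Df (\<gamma> r) (\<Sum>i\<in>UNIV. (h * g' i r) *\<^sub>R axis i 1))) (at r)"
      by (rule has_derivative_compose[OF gd fd])
    moreover have "(\<lambda>h. Df (\<gamma> r) (\<Sum>i\<in>UNIV. (h * g' i r) *\<^sub>R axis i 1)) = (\<lambda>h. d r * h)"
    proof
      fix h
      show "Df (\<gamma> r) (\<Sum>i\<in>UNIV. (h * g' i r) *\<^sub>R axis i 1) = d r * h"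
        unfolding d_def using bl[of "\<gamma> r"]
        by (simp add: linear_sum linear_scale sum_distrib_right algebra_simps)
    qed
    ultimately have "((\<lambda>r. f (\<gamma> r)) has_real_derivative d r) (at r)"
      by (simp add: has_field_derivative_def)
    thus "(ft has_real_derivative d r) (at r)"
      by (rule has_field_derivative_transform_within_open[where S="{0<..}"]) (use r ftg in auto)
  next
    have cg: "continuous_on {0<..} \<gamma>"
      unfolding \<gamma>_def by (rule continuous_on_subset[OF cont_dil_r[OF nu]]) auto
    have cD: "continuous_on {0<..} (\<lambda>r. Df (\<gamma> r) (axis i 1))" for i
    proof -
      have "continuous_on UNIV (\<lambda>z. Df z (axis i 1))" unfolding Df_def by (rule smooth_diff(2)[OF sm])
      thus ?thesis by (rule continuous_on_compose2[OF _ cg]) auto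
    qed
    show "continuous_on {0<..} d"
      unfolding d_def g'_def by (intro continuous_intros cD) auto
  qed
qed

lemma ft_support:
  fixes f :: "real^'n::finite \<Rightarrow> real"
  assumes hq: "hom_quasi_norm \<nu> N" and ff: "\<forall>x. f x = ft (N x)"
    and K: "compact (closure {x. f x \<noteq> 0})" and K0: "0 \<notin> closure {x. f x \<noteq> 0}"
  obtains a0 b0 where "0 < a0" "a0 \<le> b0" "\<And>r. r > 0 \<Longrightarrow> ft r \<noteq> 0 \<Longrightarrow> a0 \<le> r \<and> r \<le> b0"
proof -
  define KK where "KK = closure {x. f x \<noteq> 0}"
  define e :: "real^'n" where "e = 1"
  have e: "e \<noteq> 0" by (simp add: e_def vec_eq_iff)
  define y0 where "y0 = dil \<nu> (1 / N e) e"
  have y0: "N y0 = 1" unfolding y0_def by (rule N_dil_norm[OF hq e])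
  have inK: "dil \<nu> r y0 \<in> KK \<and> N (dil \<nu> r y0) = r" if "r > 0" "ft r \<noteq> 0" for r
  proof -
    have N1: "N (dil \<nu> r y0) = r" using N_dil[OF hq that(1), of y0] y0 by simp
    hence "f (dil \<nu> r y0) \<noteq> 0" using ff that by simp
    hence "dil \<nu> r y0 \<in> {x. f x \<noteq> 0}" by simp
    hence "dil \<nu> r y0 \<in> KK" unfolding KK_def using closure_subset by (rule rev_subsetD)
    thus ?thesis using N1 by simp
  qed
  show ?thesis
  proof (cases "KK = {}")
    case True
    show ?thesis
    proof (rule that[of 1 1])
      fix r :: real assume "r > 0" "ft r \<noteq> 0"
      from inK[OF this] True show "1 \<le> r \<and> r \<le> 1" by simp
    qed simp_all
  next
    case False
    have cK: "continuous_on KK N" using N_cont[OF hq] by (rule continuous_on_subset) simp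
    have cKK: "compact KK" using K by (simp add: KK_def)
    obtain k1 where k1: "k1 \<in> KK" "\<And>y. y \<in> KK \<Longrightarrow> N k1 \<le> N y"
      using continuous_attains_inf[OF cKK False cK] by auto
    obtain k2 where k2: "k2 \<in> KK" "\<And>y. y \<in> KK \<Longrightarrow> N y \<le> N k2"
      using continuous_attains_sup[OF cKK False cK] by auto
    have "k1 \<noteq> 0" proof assume "k1 = 0" thus False using k1(1) K0 unfolding KK_def by simp qed
    hence a: "N k1 > 0" by (rule N_pos[OF hq])
    show ?thesis
    proof (rule that[OF a])
      show "N k1 \<le> N k2" using k2(2)[OF k1(1)] .
      fix r :: real assume "r > 0" "ft r \<noteq> 0"
      from inK[OF this] have "dil \<nu> r y0 \<in> KK" "N (dil \<nu> r y0) = r" by auto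
      thus "N k1 \<le> r \<and> r \<le> N k2" using k1(2)[of "dil \<nu> r y0"] k2(2)[of "dil \<nu> r y0"] by simp
    qed
  qed
qed

lemma deriv_zero_on:
  assumes "(ft has_real_derivative D) (at r)" "open S" "r \<in> S" "\<And>s. s \<in> S \<Longrightarrow> ft s = 0"
  shows "D = 0"
proof -
  have "((\<lambda>_. 0::real) has_real_derivative D) (at r)"
    by (rule has_field_derivative_transform_within_open[OF assms(1-3)]) (use assms(4) in auto)
  moreover have "((\<lambda>_. 0::real) has_real_derivative 0) (at r)" by simp
  ultimately show ?thesis by (rule DERIV_unique)
qed


lemma integral_cong_except0:
  fixes F H :: "real^'n::finite \<Rightarrow> real"
  assumes i: "integrable lborel H" and e: "\<And>x. x \<noteq> 0 \<Longrightarrow> F x = H x"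
  shows "integral\<^sup>L lborel F = integral\<^sup>L lborel H"
proof -
  have [measurable]: "H \<in> borel_measurable lborel" using i by (rule borel_measurable_integrable)
  have Fe: "F = (\<lambda>x. if x = 0 then F 0 else H x)" using e by (auto simp: fun_eq_iff)
  have "(\<lambda>x. if x = 0 then F 0 else H x) \<in> borel_measurable lborel" by measurable
  hence [measurable]: "F \<in> borel_measurable lborel" using Fe by simp
  show ?thesis
    by (rule integral_cong_AE) (use AE_lborel_singleton[of 0] e in \<open>auto elim!: eventually_mono\<close>)
qed

theorem mainTheorem5:
  fixes gmul :: "real^'n::finite \<Rightarrow> real^'n \<Rightarrow> real^'n"
    and \<nu> :: "'n \<Rightarrow> real"
    and N :: "real^'n \<Rightarrow> real"
    and f :: "real^'n \<Rightarrow> real"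
    and ft :: "real \<Rightarrow> real"
    and p \<alpha> :: real
  assumes "homogeneous_group gmul \<nu>"
    and "hom_quasi_norm \<nu> N"
    and "hom_dim \<nu> \<ge> 3"
    and "2 \<le> p" and "p < hom_dim \<nu>"
    and "\<alpha> < (hom_dim \<nu> - p) / p"
    and "smooth_fun f"
    and "compact (closure {x. f x \<noteq> 0})"
    and "0 \<notin> closure {x. f x \<noteq> 0}"
    and "\<forall>x. f x = ft (N x)"
  shows "(\<integral>x. \<bar>rad_deriv \<nu> N f x\<bar> powr p / N x powr (\<alpha> * p) \<partial>lborel)
         - ((hom_dim \<nu> - p - \<alpha> * p) / p) powr p
           * (\<integral>x. \<bar>f x\<bar> powr p / N x powr ((\<alpha> + 1) * p) \<partial>lborel)
         \<ge> c_const p *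
           (\<integral>x. \<bar>rad_deriv \<nu> N (\<lambda>y. N y powr ((hom_dim \<nu> - p - \<alpha> * p) / p) * f y) x\<bar> powr p
                 * N x powr (p - hom_dim \<nu>) \<partial>lborel)"
proof -
  note hq = assms(2) and p = assms(4) and ff = assms(10)
  have nu: "\<forall>i. \<nu> i > 0" using assms(1) by (simp add: homogeneous_group_def)
  define Q where "Q = hom_dim \<nu>"
  have p0: "p > 0" using p by simp
  obtain d where d: "\<And>r. r > 0 \<Longrightarrow> (ft has_real_derivative d r) (at r)" and dc: "continuous_on {0<..} d"
    using ft_deriv[OF hq nu assms(7) ff] by blast
  obtain a0 b0 where a0: "0 < a0" "a0 \<le> b0" and supp: "\<And>r. r > 0 \<Longrightarrow> ft r \<noteq> 0 \<Longrightarrow> a0 \<le> r \<and> r \<le> b0"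
    using ft_support[OF hq ff assms(8) assms(9)] by blast
  define a where "a = a0 / 2"
  define b where "b = 2 * b0"
  have ab: "0 < a" "a \<le> b" "a < a0" "b0 < b" using a0 by (auto simp: a_def b_def)
  have ftz: "ft r = 0" if "r > 0" "r < a0 \<or> b0 < r" for r using supp[OF that(1)] that(2) by force
  have dz: "d r = 0" if "r > 0" "r < a0 \<or> b0 < r" for r
  proof (cases "r < a0")
    case True
    show ?thesis by (rule deriv_zero_on[OF d[OF that(1)], of "{0<..<a0}"]) (use True that ftz in auto)
  next
    case False
    hence "b0 < r" using that by simp
    show ?thesis by (rule deriv_zero_on[OF d[OF that(1)], of "{b0<..}"]) (use \<open>b0 < r\<close> a0 ftz in auto)
  qed
  define C where "C = (Q - p - \<alpha> * p) / p"
  have Cp: "C * p = Q - p - \<alpha> * p" using p0 by (simp add: C_def)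
  have C0: "C > 0"
  proof -
    have "\<alpha> * p < Q - p" using assms(6) p0 by (simp add: Q_def field_simps)
    thus ?thesis using p0 by (simp add: C_def)
  qed
  define G where "G r = r powr C * ft r" for r
  define dG where "dG r = C * r powr (C - 1) * ft r + r powr C * d r" for r
  have Gd: "(G has_real_derivative dG r) (at r)" if "r > 0" for r
  proof -
    have "((\<lambda>r. r powr C) has_real_derivative C * r powr (C - 1)) (at r)"
      using that by (auto intro!: derivative_eq_intros)
    from DERIV_mult[OF this d[OF that]] show ?thesis
      unfolding G_def dG_def by (simp add: algebra_simps)
  qed
  have ftc: "continuous_on {0<..} ft"
    using d by (intro continuous_at_imp_continuous_on ballI DERIV_isCont) auto
  have radf: "rad_deriv \<nu> N f x = d (N x)" if "x \<noteq> 0" for x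
    by (rule rad_deriv_eq[OF hq that d[OF N_pos[OF hq that]]]) (use ff in simp)
  have radg: "rad_deriv \<nu> N (\<lambda>y. N y powr C * f y) x = dG (N x)" if "x \<noteq> 0" for x
    by (rule rad_deriv_eq[OF hq that Gd[OF N_pos[OF hq that]]]) (use ff in \<open>simp add: G_def\<close>)
  have sub: "{a..b} \<subseteq> {0<..}" using ab by auto
  have cd: "continuous_on {a..b} d" using dc sub by (rule continuous_on_subset)
  have cft: "continuous_on {a..b} ft" using ftc sub by (rule continuous_on_subset)
  have cdG: "continuous_on {a..b} dG" unfolding dG_def using ab
    by (intro continuous_intros cd cft) auto
  define h1 where "h1 r = \<bar>d r\<bar> powr p / r powr (\<alpha>*p)" for r
  define h2 where "h2 r = \<bar>ft r\<bar> powr p / r powr ((\<alpha>+1)*p)" for r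
  define h3 where "h3 r = \<bar>dG r\<bar> powr p * r powr (p - Q)" for r
  have ca: "continuous_on {a..b} (\<lambda>r. \<bar>u r\<bar> powr p)" if "continuous_on {a..b} u" for u
    using that p0 by (intro continuous_on_powr' continuous_intros) auto
  have ch1: "continuous_on {a..b} h1" unfolding h1_def using ab
    by (intro continuous_intros ca cd) auto
  have ch2: "continuous_on {a..b} h2" unfolding h2_def using ab
    by (intro continuous_intros ca cft) auto
  have ch3: "continuous_on {a..b} h3" unfolding h3_def using ab
    by (intro continuous_intros ca cdG) auto
  define \<sigma> where "\<sigma> = Q * measure lborel {x. N x < 1}"
  have \<sigma>0: "\<sigma> \<ge> 0" unfolding \<sigma>_def Q_def using hom_dim_pos[OF nu] by simp
  define J where "J h = (\<integral>r. indicator {a..b} r * (h r * r powr (Q - 1)) \<partial>lborel)" for h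
  have out: "N x < a0 \<or> b0 < N x" if "x \<noteq> 0" "N x \<notin> {a..b}" for x using that ab by auto
  have I1: "(\<integral>x. \<bar>rad_deriv \<nu> N f x\<bar> powr p / N x powr (\<alpha> * p) \<partial>lborel) = \<sigma> * J h1"
  proof -
    have "(\<integral>x. \<bar>rad_deriv \<nu> N f x\<bar> powr p / N x powr (\<alpha> * p) \<partial>lborel)
       = (\<integral>x. indicator {a..b} (N x) * h1 (N x) \<partial>lborel)"
    proof (rule integral_cong_except0[OF polar(1)[OF hq nu ab(1,2) ch1]])
      fix x :: "real^'n" assume x: "x \<noteq> 0"
      show "\<bar>rad_deriv \<nu> N f x\<bar> powr p / N x powr (\<alpha> * p) = indicator {a..b} (N x) * h1 (N x)"
      proof (cases "N x \<in> {a..b}")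
        case False
        have "d (N x) = 0" by (rule dz[OF N_pos[OF hq x] out[OF x False]])
        thus ?thesis using False radf[OF x] by simp
      qed (simp add: radf[OF x] h1_def)
    qed
    thus ?thesis using polar(2)[OF hq nu ab(1,2) ch1] by (simp add: J_def \<sigma>_def Q_def)
  qed
  have I2: "(\<integral>x. \<bar>f x\<bar> powr p / N x powr ((\<alpha> + 1) * p) \<partial>lborel) = \<sigma> * J h2"
  proof -
    have "(\<integral>x. \<bar>f x\<bar> powr p / N x powr ((\<alpha> + 1) * p) \<partial>lborel)
       = (\<integral>x. indicator {a..b} (N x) * h2 (N x) \<partial>lborel)"
    proof (rule integral_cong_except0[OF polar(1)[OF hq nu ab(1,2) ch2]])
      fix x :: "real^'n" assume x: "x \<noteq> 0"
      show "\<bar>f x\<bar> powr p / N x powr ((\<alpha> + 1) * p) = indicator {a..b} (N x) * h2 (N x)"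
      proof (cases "N x \<in> {a..b}")
        case False
        have "ft (N x) = 0" by (rule ftz[OF N_pos[OF hq x] out[OF x False]])
        thus ?thesis using False ff by simp
      qed (simp add: ff h2_def)
    qed
    thus ?thesis using polar(2)[OF hq nu ab(1,2) ch2] by (simp add: J_def \<sigma>_def Q_def)
  qed
  have I3: "(\<integral>x. \<bar>rad_deriv \<nu> N (\<lambda>y. N y powr C * f y) x\<bar> powr p * N x powr (p - Q) \<partial>lborel) = \<sigma> * J h3"
  proof -
    have "(\<integral>x. \<bar>rad_deriv \<nu> N (\<lambda>y. N y powr C * f y) x\<bar> powr p * N x powr (p - Q) \<partial>lborel)
       = (\<integral>x. indicator {a..b} (N x) * h3 (N x) \<partial>lborel)"
    proof (rule integral_cong_except0[OF polar(1)[OF hq nu ab(1,2) ch3]])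
      fix x :: "real^'n" assume x: "x \<noteq> 0"
      show "\<bar>rad_deriv \<nu> N (\<lambda>y. N y powr C * f y) x\<bar> powr p * N x powr (p - Q) = indicator {a..b} (N x) * h3 (N x)"
      proof (cases "N x \<in> {a..b}")
        case False
        have "ft (N x) = 0" by (rule ftz[OF N_pos[OF hq x] out[OF x False]])
        moreover have "d (N x) = 0" by (rule dz[OF N_pos[OF hq x] out[OF x False]])
        ultimately have "dG (N x) = 0" by (simp add: dG_def)
        thus ?thesis using False radg[OF x] by simp
      qed (simp add: radg[OF x] h3_def)
    qed
    thus ?thesis using polar(2)[OF hq nu ab(1,2) ch3] by (simp add: J_def \<sigma>_def Q_def)
  qed
  have iJ: "integrable lborel (\<lambda>r. indicator {a..b} r * (h r * r powr (Q - 1)))"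
    if "continuous_on {a..b} h" for h
  proof -
    have "continuous_on {a..b} (\<lambda>r. h r * r powr (Q - 1))" using that ab
      by (intro continuous_intros) auto
    from borel_integrable_atLeastAtMost'[OF this] show ?thesis by (simp add: set_integrable_def)
  qed
  note i1 = iJ[OF ch1] and i2 = iJ[OF ch2] and i3 = iJ[OF ch3]
  define Kf where "Kf r = indicator {a..b} r * (h1 r * r powr (Q - 1))
     - (C powr p * (indicator {a..b} r * (h2 r * r powr (Q - 1)))
     + c_const p * (indicator {a..b} r * (h3 r * r powr (Q - 1))))" for r
  have iK: "integrable lborel Kf" unfolding Kf_def using i1 i2 i3 by auto
  have JK: "(\<integral>r. Kf r \<partial>lborel) = J h1 - C powr p * J h2 - c_const p * J h3"
    unfolding Kf_def J_def using i1 i2 i3 by simp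
  define Rf where "Rf r = - (C powr (p - 1)) * (indicator {a..b} r * (p * psi p (G r) * dG r))" for r
  have Ga: "G a = 0" unfolding G_def using ftz[of a] ab by simp
  have Gb: "G b = 0" unfolding G_def using ftz[of b] ab by simp
  have Gd': "(G has_real_derivative dG r) (at r)" if "r \<in> {a..b}" for r using Gd that ab by auto
  note F = ftc_zero[OF p ab(2) Gd' cdG Ga Gb]
  have iR: "integrable lborel Rf" unfolding Rf_def using F(1) by simp
  have JR: "(\<integral>r. Rf r \<partial>lborel) = 0" unfolding Rf_def using F(2) by simp
  have "(\<integral>r. Rf r \<partial>lborel) \<le> (\<integral>r. Kf r \<partial>lborel)"
  proof (rule integral_mono[OF iR iK])
    fix r :: real
    show "Rf r \<le> Kf r"
    proof (cases "r \<in> {a..b}")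
      case True
      hence r: "r > 0" using ab by auto
      have "- (p * psi p (r powr C * ft r) * (C * r powr (C-1) * ft r + r powr C * d r)) * C powr (p-1)
        \<le> \<bar>d r\<bar> powr p / r powr (\<alpha>*p) * r powr (Q-1)
         - C powr p * (\<bar>ft r\<bar> powr p / r powr ((\<alpha>+1)*p) * r powr (Q-1))
         - c_const p * (\<bar>C * r powr (C-1) * ft r + r powr C * d r\<bar> powr p * r powr (p - Q) * r powr (Q-1))"
        by (rule pointwise[OF p r C0 Cp])
      thus ?thesis using True unfolding Rf_def Kf_def h1_def h2_def h3_def G_def dG_def
        by (simp add: algebra_simps)
    qed (simp add: Rf_def Kf_def)
  qed
  hence key: "J h1 - C powr p * J h2 - c_const p * J h3 \<ge> 0" using JK JR by simp
  have "c_const p * (\<sigma> * J h3) \<le> \<sigma> * J h1 - C powr p * (\<sigma> * J h2)"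
  proof -
    have "0 \<le> \<sigma> * (J h1 - C powr p * J h2 - c_const p * J h3)" using \<sigma>0 key by simp
    thus ?thesis by (simp add: algebra_simps)
  qed
  moreover have "(hom_dim \<nu> - p - \<alpha> * p) / p = C" by (simp add: C_def Q_def)
  ultimately show ?thesis using I1 I2 I3 by (simp add: Q_def)
qed


end
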